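(* The variational equations of the slowly varying envelope (SVE) approximation imply the following Kelvin circulation theorem \begin{align} \frac{d}{dt}\oint_{c(\mathbf{\widehat v})} \Big( \mathbf{\widehat{v}}\cdot d\mathbf{r} + {\cal N} d \frac{d\theta}{dt} \Big) = - \oint_{c(\mathbf{\widehat v})} \frac{1}{\rho}dp\,. \end{align}
   Context: Setting: a 2D free surface model with divergence-free horizontal current velocity $\mathbf{\widehat v}(\mathbf{r},t)$ carrying a vertical wave elevation, in the WKB/SVE approximation $\zeta = \Re\big(a(\mathbf{r},t)e^{i\theta(\mathbf{r},t)/\epsilon}\big)$, $\epsilon\ll1$. The leading-order action is $S_{SVE}=\int_a^b\int_{\cal D} \tfrac{1}{2}D\rho |\mathbf{\widehat{v}}|^2 - p(D-1) + \tfrac{\sigma^2|a|^2}{8\epsilon^2} D\rho \Big( \big(\tfrac{d\theta}{dt}\big)^2 - \tfrac{\rho_{ref}}{\rho} \tfrac{\epsilon^2}{\sigma^2 Fr^2} \Big)\,d^2r\,dt$, with $\frac{d\theta}{dt} = \partial_t\theta + \mathbf{\widehat v}\cdot\nabla_{\mathbf{r}}\theta$, constants $\sigma^2,Fr^2,\rho_{ref}$ with $\epsilon^2/(\sigma^2Fr^2)=O(1)$, advected areal density $D\,d^2r$ and buoyancy $\rho$, and pressure $p$ enforcing $D=1$. Here ${\cal N}:= \sigma^2|a|^2/(4\epsilon^2)$. The variations give $d\theta/dt=\sqrt{\rho\rho_{ref}}/\rho$, conservation of wave action, and advection of $|a|^2$. The loop $c(\mathbf{\widehat v})$ moves with the horizontal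 flow. *)

theory Defs
  imports "HOL-Analysis.Analysis"
begin

definition C1fun :: "('a::real_normed_vector \<Rightarrow> 'b::real_normed_vector) \<Rightarrow> bool" where
  "C1fun F \<longleftrightarrow> (\<exists>F'. (\<forall>z. (F has_derivative blinfun_apply (F' z)) (at z)) \<and> continuous_on UNIV F')"

definition C2fun :: "('a::real_normed_vector \<Rightarrow> 'b::real_normed_vector) \<Rightarrow> bool" where
  "C2fun F \<longleftrightarrow> (\<exists>F'. (\<forall>z. (F has_derivative blinfun_apply (F' z)) (at z)) \<and> C1fun F')"

definition smooth2 :: "(real \<Rightarrow> 'a::real_normed_vector \<Rightarrow> 'b::real_normed_vector) \<Rightarrow> bool" where
  "smooth2 f \<longleftrightarrow> C2fun (\<lambda>z. f (fst z) (snd z))"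

definition dt :: "(real \<Rightarrow> 'a \<Rightarrow> 'b::real_normed_vector) \<Rightarrow> real \<Rightarrow> 'a \<Rightarrow> 'b" where
  "dt f t x = vector_derivative (\<lambda>s. f s x) (at t)"

definition pd :: "(real^2 \<Rightarrow> 'b::real_normed_vector) \<Rightarrow> 2 \<Rightarrow> real^2 \<Rightarrow> 'b" where
  "pd f i x = frechet_derivative f (at x) (axis i 1)"

definition grad :: "(real^2 \<Rightarrow> real) \<Rightarrow> real^2 \<Rightarrow> real^2" where
  "grad f x = (\<chi> i. pd f i x)"

definition divg :: "(real^2 \<Rightarrow> real^2) \<Rightarrow> real^2 \<Rightarrow> real" where
  "divg F x = (\<Sum>i\<in>UNIV. pd (\<lambda>y. F y $ i) i x)"

definition matd :: "(real \<Rightarrow> real^2 \<Rightarrow> real^2) \<Rightarrow> (real \<Rightarrow> real^2 \<Rightarrow> real) \<Rightarrow> real \<Rightarrow> real^2 \<Rightarrow> real" where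
  "matd v f t x = dt f t x + v t x \<bullet> grad (f t) x"

definition waveN :: "real \<Rightarrow> real \<Rightarrow> (real \<Rightarrow> real^2 \<Rightarrow> complex) \<Rightarrow> real \<Rightarrow> real^2 \<Rightarrow> real" where
  "waveN \<sigma> \<epsilon> a t x = \<sigma>\<^sup>2 * (cmod (a t x))\<^sup>2 / (4 * \<epsilon>\<^sup>2)"

text \<open>Variational derivatives of the reduced SVE Lagrangian
  l = \<integral> 1/2 D rho |v|^2 - p(D-1) + (N/2) D rho ((d theta/dt)^2 - (rho_ref/rho) K),
  K = eps^2/(sigma^2 Fr^2).\<close>

definition Kconst :: "real \<Rightarrow> real \<Rightarrow> real \<Rightarrow> real" where
  "Kconst \<sigma> \<epsilon> Fr = \<epsilon>\<^sup>2 / (\<sigma>\<^sup>2 * Fr\<^sup>2)"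

definition SVE_mom where
  "SVE_mom \<sigma> \<epsilon> v D \<rho> \<theta> a t x =
     (D t x * \<rho> t x) *\<^sub>R (v t x + (waveN \<sigma> \<epsilon> a t x * matd v \<theta> t x) *\<^sub>R grad (\<theta> t) x)"

definition SVE_dD where
  "SVE_dD \<sigma> \<epsilon> Fr \<rho>ref v \<rho> \<theta> a p t x =
     1/2 * \<rho> t x * (norm (v t x))\<^sup>2 - p t x
     + waveN \<sigma> \<epsilon> a t x / 2 * \<rho> t x * ((matd v \<theta> t x)\<^sup>2 - \<rho>ref / \<rho> t x * Kconst \<sigma> \<epsilon> Fr)"

definition SVE_drho where
  "SVE_drho \<sigma> \<epsilon> v D \<theta> a t x =
     1/2 * D t x * (norm (v t x))\<^sup>2 + waveN \<sigma> \<epsilon> a t x / 2 * D t x * (matd v \<theta> t x)\<^sup>2"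

definition circ :: "(real^2 \<Rightarrow> real^2) \<Rightarrow> (real \<Rightarrow> real^2) \<Rightarrow> real" where
  "circ \<alpha> \<gamma> = integral {0..1} (\<lambda>s. \<alpha> (\<gamma> s) \<bullet> vector_derivative \<gamma> (at s))"

end

theory Submission
  imports Defs
begin


lemma lin2:
  fixes L :: "real \<times> (real^2) \<Rightarrow> 'b::real_normed_vector"
  assumes "linear L"
  shows "L (0, w) = (\<Sum>i\<in>UNIV. w $ i *\<^sub>R L (0, axis i 1))"
proof -
  have "(0::real, w) = (\<Sum>i\<in>UNIV. w $ i *\<^sub>R (0::real, axis i (1::real)))"
    by (simp add: sum_2 prod_eq_iff vec_eq_iff forall_2 axis_def)
  then have "L (0, w) = L (\<Sum>i\<in>UNIV. w $ i *\<^sub>R (0::real, axis i (1::real)))" by simp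
  also have "\<dots> = (\<Sum>i\<in>UNIV. L (w $ i *\<^sub>R (0::real, axis i (1::real))))"
    by (rule linear_sum[OF assms])
  also have "\<dots> = (\<Sum>i\<in>UNIV. w $ i *\<^sub>R L (0, axis i 1))"
    by (simp only: linear_scale[OF assms])
  finally show ?thesis .
qed

lemma lin1:
  fixes L :: "real \<times> (real^2) \<Rightarrow> 'b::real_normed_vector"
  assumes "linear L"
  shows "L (s, w) = s *\<^sub>R L (1, 0) + L (0, w)"
proof -
  have "(s, w) = s *\<^sub>R (1::real, 0::real^2) + (0, w)" by simp
  then show ?thesis using assms by (metis linear_add linear_scale)
qed

lemma dt_eq:
  fixes f :: "real \<Rightarrow> real^2 \<Rightarrow> 'b::real_normed_vector"
  assumes HD: "\<And>z. ((\<lambda>z. f (fst z) (snd z)) has_derivative Df z) (at z)"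
  shows "dt f t x = Df (t,x) (1,0)"
proof -
  have "((\<lambda>s. (s, x)) has_derivative (\<lambda>h. (h, 0))) (at t)"
    by (rule has_derivative_Pair[OF has_derivative_ident has_derivative_const])
  from has_derivative_compose[OF this HD[of "(t,x)"]]
  have d: "((\<lambda>s. f s x) has_derivative (\<lambda>h. Df (t,x) (h,0))) (at t)" by simp
  have lin: "linear (Df (t,x))" by (rule has_derivative_linear[OF HD])
  have "(\<lambda>h. Df (t,x) (h,0)) = (\<lambda>h. h *\<^sub>R Df (t,x) (1,0))"
  proof
    fix h :: real
    have "(h, 0::real^2) = h *\<^sub>R (1::real, 0::real^2)" by simp
    then show "Df (t,x) (h,0) = h *\<^sub>R Df (t,x) (1,0)" by (metis linear_scale[OF lin])
  qed
  with d have "((\<lambda>s. f s x) has_vector_derivative Df (t,x) (1,0)) (at t)"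
    by (simp add: has_vector_derivative_def)
  then show ?thesis unfolding dt_def by (rule vector_derivative_at)
qed

lemma pdx:
  assumes HD: "\<And>z. ((\<lambda>z. f (fst z) (snd z)) has_derivative Df z) (at z)"
  shows "((f t) has_derivative (\<lambda>h. Df (t,x) (0,h))) (at x)"
proof -
  have "((\<lambda>y. (t, y)) has_derivative (\<lambda>h. (0, h))) (at x)"
    by (rule has_derivative_Pair[OF has_derivative_const has_derivative_ident])
  from has_derivative_compose[OF this HD[of "(t,x)"]] show ?thesis by simp
qed

lemma pd_eq:
  assumes HD: "\<And>z. ((\<lambda>z. f (fst z) (snd z)) has_derivative Df z) (at z)"
  shows "pd (f t) i x = Df (t,x) (0, axis i 1)"
proof -
  have "frechet_derivative (f t) (at x) = (\<lambda>h. Df (t,x) (0,h))"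
    by (rule frechet_derivative_at[symmetric, OF pdx[OF HD]])
  then show ?thesis unfolding pd_def by simp
qed

lemma grad_inner:
  fixes f :: "real \<Rightarrow> real^2 \<Rightarrow> real"
  assumes HD: "\<And>z. ((\<lambda>z. f (fst z) (snd z)) has_derivative Df z) (at z)"
  shows "grad (f t) x \<bullet> w = Df (t,x) (0, w)"
proof -
  have lin: "linear (Df (t,x))" by (rule has_derivative_linear[OF HD])
  show ?thesis
    unfolding grad_def inner_vec_def using lin2[OF lin, of w]
    by (simp add: pd_eq[OF HD] mult.commute)
qed

lemma matd_eq:
  fixes f :: "real \<Rightarrow> real^2 \<Rightarrow> real"
  assumes HD: "\<And>z. ((\<lambda>z. f (fst z) (snd z)) has_derivative Df z) (at z)"
  shows "matd v f t x = Df (t,x) (1, v t x)"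
proof -
  have lin: "linear (Df (t,x))" by (rule has_derivative_linear[OF HD])
  show ?thesis unfolding matd_def dt_eq[OF HD] using lin1[OF lin, of 1 "v t x"]
    by (simp add: grad_inner[OF HD, symmetric] inner_commute)
qed

lemma comp_nth:
  assumes HD: "\<And>z. ((\<lambda>z. f (fst z) (snd z)) has_derivative Df z) (at z)"
  shows "((\<lambda>z. f (fst z) (snd z) $ j) has_derivative (\<lambda>k. Df z k $ j)) (at z)"
  using bounded_linear.has_derivative[OF bounded_linear_vec_nth HD] by simp



lemma line_vd:
  assumes d: "\<And>y. (G has_derivative G' y) (at y)"
  shows "((\<lambda>s. G (p + s *\<^sub>R u)) has_vector_derivative G' (p + s *\<^sub>R u) u) (at s)"
proof -
  have a: "((\<lambda>s. p + s *\<^sub>R u) has_derivative (\<lambda>h. h *\<^sub>R u)) (at s)"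
    by (auto intro!: derivative_eq_intros)
  have lin: "linear (G' (p + s *\<^sub>R u))" by (rule has_derivative_linear[OF d])
  from has_derivative_compose[OF a d]
  have "((\<lambda>s. G (p + s *\<^sub>R u)) has_derivative (\<lambda>h. G' (p + s *\<^sub>R u) (h *\<^sub>R u))) (at s)" .
  then show ?thesis unfolding has_vector_derivative_def by (simp add: linear_scale[OF lin])
qed

lemma sym2:
  fixes F :: "'a::real_normed_vector \<Rightarrow> 'b::banach"
  assumes d1: "\<And>z. (F has_derivative blinfun_apply (F1 z)) (at z)"
    and d2: "\<And>z. (F1 has_derivative blinfun_apply (F2 z)) (at z)"
    and c2: "continuous_on UNIV F2"
  shows "blinfun_apply (blinfun_apply (F2 z) u) w = blinfun_apply (blinfun_apply (F2 z) w) u"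
proof -
  define k where "k s \<tau> = blinfun_apply (F1 (z + s *\<^sub>R u + \<tau> *\<^sub>R w)) w" for s \<tau>
  define kx where "kx s \<tau> = blinfun_apply (blinfun_apply (F2 (z + s *\<^sub>R u + \<tau> *\<^sub>R w)) u) w" for s \<tau>
  have dG: "((\<lambda>y. blinfun_apply (F1 y) w) has_derivative (\<lambda>h. blinfun_apply (blinfun_apply (F2 y) h) w)) (at y)" for y
    using bounded_linear.has_derivative[OF bounded_bilinear.bounded_linear_left[OF bounded_bilinear_blinfun_apply] d2[of y]]
    by simp
  have cF2: "continuous_on S (\<lambda>x. F2 (g x))" if "continuous_on S g" for S and g :: "'c::topological_space \<Rightarrow> 'a"
    using continuous_on_compose2[OF c2 that] by auto
  have ckx: "continuous_on X (\<lambda>(s, \<tau>). kx s \<tau>)" for X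
    unfolding kx_def split_beta
    by (intro continuous_intros cF2) 
  have cint: "continuous_on X (\<lambda>\<tau>. kx s \<tau>)" for X s
    unfolding kx_def by (intro continuous_intros cF2)
  have ck: "continuous_on X (\<lambda>\<tau>. k s \<tau>)" for X s
  proof -
    have "continuous_on UNIV F1"
      using d2 by (meson has_derivative_continuous continuous_at_imp_continuous_on)
    then show ?thesis unfolding k_def
      by (intro continuous_intros continuous_on_compose2[OF \<open>continuous_on UNIV F1\<close>]) auto
  qed
  have A: "F (z + s *\<^sub>R u + t *\<^sub>R w) - F (z + s *\<^sub>R u + (-1) *\<^sub>R w) = integral {-1..t} (k s)"
    if "-1 \<le> t" for s t
  proof -
    have "((k s) has_integral (F (z + s *\<^sub>R u + t *\<^sub>R w) - F (z + s *\<^sub>R u + (-1) *\<^sub>R w))) {-1..t}"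
    proof (rule fundamental_theorem_of_calculus[OF that])
      fix x assume "x \<in> {-1..t}"
      show "((\<lambda>\<tau>. F (z + s *\<^sub>R u + \<tau> *\<^sub>R w)) has_vector_derivative k s x) (at x within {-1..t})"
        unfolding k_def by (rule has_vector_derivative_at_within[OF line_vd[OF d1]])
    qed
    then show ?thesis by (simp add: integral_unique)
  qed
  have B: "blinfun_apply (F1 (z + t *\<^sub>R w)) u - blinfun_apply (F1 (z + (-1) *\<^sub>R w)) u = integral {-1..t} (kx 0)"
    if "-1 \<le> t" for t
  proof -
    have L: "((\<lambda>s. F (z + t *\<^sub>R w + s *\<^sub>R u) - F (z + (-1) *\<^sub>R w + s *\<^sub>R u)) has_vector_derivative
        (blinfun_apply (F1 (z + t *\<^sub>R w)) u - blinfun_apply (F1 (z + (-1) *\<^sub>R w)) u)) (at 0)"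
      using has_vector_derivative_diff[OF line_vd[OF d1, of "z + t *\<^sub>R w" u 0] line_vd[OF d1, of "z + (-1) *\<^sub>R w" u 0]]
      by simp
    have R: "((\<lambda>s. integral (cbox (-1) t) (k s)) has_vector_derivative integral (cbox (-1) t) (kx 0)) (at 0 within UNIV)"
    proof (rule leibniz_rule_vector_derivative)
      fix s \<tau>
      show "((\<lambda>s. k s \<tau>) has_vector_derivative kx s \<tau>) (at s within UNIV)"
        using line_vd[OF dG, of "z + \<tau> *\<^sub>R w" u s] unfolding k_def kx_def
        by (simp add: algebra_simps)
    next
      fix s show "k s integrable_on cbox (-1) t"
        by (rule integrable_continuous[OF ck])
    next
      show "continuous_on (UNIV \<times> cbox (- 1) t) (\<lambda>(x, t). kx x t)" by (rule ckx)
    qed auto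
    have eq: "(\<lambda>s. integral (cbox (-1) t) (k s)) = (\<lambda>s. F (z + t *\<^sub>R w + s *\<^sub>R u) - F (z + (-1) *\<^sub>R w + s *\<^sub>R u))"
      using A[OF that] by (auto simp: algebra_simps)
    show ?thesis using R L unfolding eq by (simp add: vector_derivative_unique_at)
  qed
  have L2: "((\<lambda>t. blinfun_apply (F1 (z + t *\<^sub>R w)) u - blinfun_apply (F1 (z + (-1) *\<^sub>R w)) u)
      has_vector_derivative blinfun_apply (blinfun_apply (F2 z) w) u) (at 0)"
  proof -
    have dGu: "((\<lambda>y. blinfun_apply (F1 y) u) has_derivative (\<lambda>h. blinfun_apply (blinfun_apply (F2 y) h) u)) (at y)" for y
      using bounded_linear.has_derivative[OF bounded_bilinear.bounded_linear_left[OF bounded_bilinear_blinfun_apply] d2[of y]]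
      by simp
    show ?thesis using has_vector_derivative_diff[OF line_vd[OF dGu, of z w 0] has_vector_derivative_const]
      by simp
  qed
  have R2: "((\<lambda>t. integral {-1..t} (kx 0)) has_vector_derivative kx 0 0) (at 0)"
  proof -
    have "((\<lambda>t. integral {-1..t} (kx 0)) has_vector_derivative kx 0 0) (at 0 within {-1..1})"
      by (rule integral_has_vector_derivative[OF cint]) auto
    moreover have "at (0::real) within {-1..1} = at 0"
      by (rule at_within_interior) auto
    ultimately show ?thesis by simp
  qed
  have L3: "((\<lambda>t. integral {-1..t} (kx 0)) has_vector_derivative blinfun_apply (blinfun_apply (F2 z) w) u) (at 0)"
    using L2 unfolding has_vector_derivative_def
    by (rule has_derivative_transform_within_open[where s="{-1<..}"]) (auto intro!: B[simplified])
  have "kx 0 0 = blinfun_apply (blinfun_apply (F2 z) w) u"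
    using vector_derivative_unique_at[OF R2 L3] .
  then show ?thesis unfolding kx_def by simp
qed



type_synonym Zt = "real \<times> (real^2)"
type_synonym Pt = "real \<times> real"

lemma cont_UNIV_comp:
  "continuous_on UNIV F \<Longrightarrow> continuous_on S g \<Longrightarrow> continuous_on S (\<lambda>w. F (g w))"
  by (rule continuous_on_compose2) auto

lemma diff_cont_UNIV:
  assumes "\<And>z. (F has_derivative F' z) (at z)"
  shows "continuous_on UNIV F"
  using assms by (meson has_derivative_continuous continuous_at_imp_continuous_on)

locale kelvin =
  fixes v :: "real \<Rightarrow> real^2 \<Rightarrow> real^2"
    and D \<rho> \<theta> p :: "real \<Rightarrow> real^2 \<Rightarrow> real"
    and a :: "real \<Rightarrow> real^2 \<Rightarrow> complex"
    and c :: "real \<Rightarrow> real \<Rightarrow> real^2"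
    and \<sigma> \<epsilon> Fr \<rho>ref :: real
    and V1 :: "Zt \<Rightarrow> Zt \<Rightarrow>\<^sub>L (real^2)"
    and R1 :: "Zt \<Rightarrow> Zt \<Rightarrow>\<^sub>L real"
    and R2 :: "Zt \<Rightarrow> Zt \<Rightarrow>\<^sub>L Zt \<Rightarrow>\<^sub>L real"
    and Th1 :: "Zt \<Rightarrow> Zt \<Rightarrow>\<^sub>L real"
    and Th2 :: "Zt \<Rightarrow> Zt \<Rightarrow>\<^sub>L Zt \<Rightarrow>\<^sub>L real"
    and P1 :: "Zt \<Rightarrow> Zt \<Rightarrow>\<^sub>L real"
    and A1 :: "Zt \<Rightarrow> Zt \<Rightarrow>\<^sub>L complex"
    and C1 :: "Pt \<Rightarrow> Pt \<Rightarrow>\<^sub>L (real^2)"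
    and C2 :: "Pt \<Rightarrow> Pt \<Rightarrow>\<^sub>L Pt \<Rightarrow>\<^sub>L (real^2)"
  assumes constants: "\<epsilon> > 0" "\<sigma> \<noteq> 0" "Fr \<noteq> 0" "\<rho>ref > 0"
    and rho_pos: "\<And>t x. \<rho> t x > 0"
    and var_p: "\<And>t x. D t x = 1"
    and adv_D: "\<And>t x. dt D t x + divg (\<lambda>y. D t y *\<^sub>R v t y) x = 0"
    and adv_rho: "\<And>t x. matd v \<rho> t x = 0"
    and var_a: "\<And>t x. complex_of_real (\<sigma>\<^sup>2 / (8 * \<epsilon>\<^sup>2) * D t x * \<rho> t x
                  * ((matd v \<theta> t x)\<^sup>2 - \<rho>ref / \<rho> t x * Kconst \<sigma> \<epsilon> Fr)) * a t x = 0"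
    and adv_a: "\<And>t x. matd v (\<lambda>t x. (cmod (a t x))\<^sup>2) t x = 0"
    and var_v: "\<And>t x i.
        dt (\<lambda>t x. SVE_mom \<sigma> \<epsilon> v D \<rho> \<theta> a t x $ i) t x
        + (\<Sum>j\<in>UNIV. pd (\<lambda>y. v t y $ j * SVE_mom \<sigma> \<epsilon> v D \<rho> \<theta> a t y $ i) j x)
        + (\<Sum>j\<in>UNIV. SVE_mom \<sigma> \<epsilon> v D \<rho> \<theta> a t x $ j * pd (\<lambda>y. v t y $ j) i x)
        = D t x * pd (SVE_dD \<sigma> \<epsilon> Fr \<rho>ref v \<rho> \<theta> a p t) i x
          - SVE_drho \<sigma> \<epsilon> v D \<theta> a t x * pd (\<rho> t) i x"
    and loop_closed: "\<And>t. c t 0 = c t 1"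
    and loop_flow: "\<And>t s. ((\<lambda>\<tau>. c \<tau> s) has_vector_derivative v t (c t s)) (at t)"
    and dv: "\<And>z. ((\<lambda>z. v (fst z) (snd z)) has_derivative blinfun_apply (V1 z)) (at z)"
    and cV1: "continuous_on UNIV V1"
    and dr: "\<And>z. ((\<lambda>z. \<rho> (fst z) (snd z)) has_derivative blinfun_apply (R1 z)) (at z)"
    and dR1: "\<And>z. (R1 has_derivative blinfun_apply (R2 z)) (at z)"
    and cR2: "continuous_on UNIV R2"
    and dth: "\<And>z. ((\<lambda>z. \<theta> (fst z) (snd z)) has_derivative blinfun_apply (Th1 z)) (at z)"
    and dTh1: "\<And>z. (Th1 has_derivative blinfun_apply (Th2 z)) (at z)"
    and cTh2: "continuous_on UNIV Th2"
    and dp: "\<And>z. ((\<lambda>z. p (fst z) (snd z)) has_derivative blinfun_apply (P1 z)) (at z)"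
    and cP1: "continuous_on UNIV P1"
    and da: "\<And>z. ((\<lambda>z. a (fst z) (snd z)) has_derivative blinfun_apply (A1 z)) (at z)"
    and dc: "\<And>z. ((\<lambda>z. c (fst z) (snd z)) has_derivative blinfun_apply (C1 z)) (at z)"
    and dC1: "\<And>z. (C1 has_derivative blinfun_apply (C2 z)) (at z)"
    and cC2: "continuous_on UNIV C2"
begin

definition "K0 = \<rho>ref * Kconst \<sigma> \<epsilon> Fr"
definition "NN z = waveN \<sigma> \<epsilon> a (fst z) (snd z)"
definition "qq z = matd v \<theta> (fst z) (snd z)"
definition "Vz z = (1::real, v (fst z) (snd z))"
definition "Q1 z k = blinfun_apply (blinfun_apply (Th2 z) k) (Vz z) + blinfun_apply (Th1 z) (0, blinfun_apply (V1 z) k)"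
definition "N1 z k = \<sigma>\<^sup>2 / (4 * \<epsilon>\<^sup>2) * (2 * inner (a (fst z) (snd z)) (blinfun_apply (A1 z) k))"
definition "gg z = - (NN z * qq z) / (2 * \<rho> (fst z) (snd z))"

lemma K0_pos: "K0 > 0"
  using constants by (simp add: K0_def Kconst_def)

lemma qq_eq: "qq z = blinfun_apply (Th1 z) (Vz z)"
  unfolding qq_def Vz_def using matd_eq[OF dth, of v "fst z" "snd z"] by simp

lemma dVz: "(Vz has_derivative (\<lambda>k. (0, blinfun_apply (V1 z) k))) (at z)"
  unfolding Vz_def[abs_def] by (rule has_derivative_Pair[OF has_derivative_const dv])

lemma dqq: "(qq has_derivative Q1 z) (at z)"
proof -
  have "((\<lambda>z. blinfun_apply (Th1 z) (Vz z)) has_derivative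
     (\<lambda>h. blinfun_apply (Th1 z) (0, blinfun_apply (V1 z) h) + blinfun_apply (blinfun_apply (Th2 z) h) (Vz z))) (at z)"
    by (rule bounded_bilinear.FDERIV[OF bounded_bilinear_blinfun_apply dTh1 dVz])
  then show ?thesis unfolding qq_eq[abs_def] Q1_def[abs_def] by (simp add: add.commute)
qed

lemma dqq': "((\<lambda>z. matd v \<theta> (fst z) (snd z)) has_derivative Q1 z) (at z)"
  using dqq unfolding qq_def[abs_def] .

lemma NN_eq: "NN z = \<sigma>\<^sup>2 / (4 * \<epsilon>\<^sup>2) * inner (a (fst z) (snd z)) (a (fst z) (snd z))"
  unfolding NN_def waveN_def by (simp add: power2_norm_eq_inner)

lemma dNN: "(NN has_derivative N1 z) (at z)"
proof -
  have "((\<lambda>z. inner (a (fst z) (snd z)) (a (fst z) (snd z))) has_derivative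
      (\<lambda>h. inner (a (fst z) (snd z)) (blinfun_apply (A1 z) h) + inner (blinfun_apply (A1 z) h) (a (fst z) (snd z)))) (at z)"
    by (rule has_derivative_inner[OF da da])
  then have "((\<lambda>z. \<sigma>\<^sup>2 / (4 * \<epsilon>\<^sup>2) * inner (a (fst z) (snd z)) (a (fst z) (snd z))) has_derivative
      (\<lambda>h. \<sigma>\<^sup>2 / (4 * \<epsilon>\<^sup>2) * (inner (a (fst z) (snd z)) (blinfun_apply (A1 z) h) + inner (blinfun_apply (A1 z) h) (a (fst z) (snd z))))) (at z)"
    by (rule has_derivative_mult_right)
  then show ?thesis unfolding NN_eq[abs_def] N1_def[abs_def] by (simp add: inner_commute)
qed

lemma N1_V: "N1 z (Vz z) = 0"
proof -
  have d: "((\<lambda>z. (cmod (a (fst z) (snd z)))\<^sup>2) has_derivative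
     (\<lambda>h. 2 * inner (a (fst z) (snd z)) (blinfun_apply (A1 z) h))) (at z)" for z
  proof -
    have "((\<lambda>z. inner (a (fst z) (snd z)) (a (fst z) (snd z))) has_derivative
      (\<lambda>h. inner (a (fst z) (snd z)) (blinfun_apply (A1 z) h) + inner (blinfun_apply (A1 z) h) (a (fst z) (snd z)))) (at z)"
      by (rule has_derivative_inner[OF da da])
    then show ?thesis by (simp add: power2_norm_eq_inner inner_commute)
  qed
  have "matd v (\<lambda>t x. (cmod (a t x))\<^sup>2) (fst z) (snd z) = 2 * inner (a (fst z) (snd z)) (blinfun_apply (A1 z) (Vz z))"
    using matd_eq[where f="\<lambda>t x. (cmod (a t x))\<^sup>2", OF d, of v "fst z" "snd z"] by (simp add: Vz_def)
  then show ?thesis using adv_a unfolding N1_def by simp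
qed

lemma R1_V: "blinfun_apply (R1 z) (Vz z) = 0"
  using matd_eq[OF dr, of v "fst z" "snd z"] adv_rho by (simp add: Vz_def)

lemma rho_nz: "\<rho> t x \<noteq> 0" using rho_pos[of t x] by simp

lemma qq_sq: "a (fst z) (snd z) \<noteq> 0 \<Longrightarrow> (qq z)\<^sup>2 = K0 / \<rho> (fst z) (snd z)"
proof -
  assume an: "a (fst z) (snd z) \<noteq> 0"
  let ?X = "\<sigma>\<^sup>2 / (8 * \<epsilon>\<^sup>2) * D (fst z) (snd z) * \<rho> (fst z) (snd z)
                  * ((matd v \<theta> (fst z) (snd z))\<^sup>2 - \<rho>ref / \<rho> (fst z) (snd z) * Kconst \<sigma> \<epsilon> Fr)"
  have "complex_of_real ?X * a (fst z) (snd z) = 0" by (rule var_a)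
  then have "?X = 0" using an by (simp only: mult_eq_0_iff of_real_eq_0_iff) blast
  moreover have "\<sigma>\<^sup>2 / (8 * \<epsilon>\<^sup>2) * D (fst z) (snd z) * \<rho> (fst z) (snd z) \<noteq> 0"
    using constants rho_nz var_p by simp
  ultimately have "(matd v \<theta> (fst z) (snd z))\<^sup>2 - \<rho>ref / \<rho> (fst z) (snd z) * Kconst \<sigma> \<epsilon> Fr = 0"
    by simp
  then show ?thesis unfolding qq_def K0_def by simp
qed

lemma NN_sq: "NN z * ((qq z)\<^sup>2 - K0 / \<rho> (fst z) (snd z)) = 0"
  by (cases "a (fst z) (snd z) = 0") (auto simp: NN_def waveN_def qq_sq)

lemma F2: "NN z * Q1 z k = - (NN z * qq z / (2 * \<rho> (fst z) (snd z))) * blinfun_apply (R1 z) k"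
proof (cases "a (fst z) (snd z) = 0")
  case True then show ?thesis by (simp add: NN_def waveN_def)
next
  case False
  let ?S = "{z. a (fst z) (snd z) \<noteq> 0}"
  have "continuous_on UNIV (\<lambda>z. a (fst z) (snd z))" by (rule diff_cont_UNIV[OF da])
  then have oS: "open ?S" by (rule open_Collect_neq) (rule continuous_on_const)
  have zS: "z \<in> ?S" using False by simp
  have d1: "((\<lambda>z. (qq z)\<^sup>2) has_derivative (\<lambda>k. 2 * qq z * Q1 z k)) (at z)"
    using has_derivative_power[OF dqq[of z], of 2] by (simp add: ac_simps)
  have d2: "((\<lambda>z. K0 / \<rho> (fst z) (snd z)) has_derivative
       (\<lambda>k. - (K0 * blinfun_apply (R1 z) k) / (\<rho> (fst z) (snd z))\<^sup>2)) (at z)"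
    using rho_nz by (auto intro!: derivative_eq_intros dr simp: power2_eq_square field_simps)
  have d1': "((\<lambda>z. K0 / \<rho> (fst z) (snd z)) has_derivative (\<lambda>k. 2 * qq z * Q1 z k)) (at z)"
    by (rule has_derivative_transform_within_open[OF d1 oS zS]) (simp add: qq_sq)
  have eq: "2 * qq z * Q1 z k = - (K0 * blinfun_apply (R1 z) k) / (\<rho> (fst z) (snd z))\<^sup>2"
    using has_derivative_unique[OF d1' d2] by metis
  have sq: "(qq z)\<^sup>2 = K0 / \<rho> (fst z) (snd z)" using qq_sq False by simp
  then have K: "K0 = (qq z)\<^sup>2 * \<rho> (fst z) (snd z)" using rho_nz by (simp add: field_simps)
  have qnz: "qq z \<noteq> 0" using sq K0_pos rho_nz by auto
  have H0: "2 * (qq z * (\<rho> (fst z) (snd z) * Q1 z k)) = - (blinfun_apply (R1 z) k * (qq z * qq z))"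
    using eq qnz rho_nz unfolding K by (simp add: field_simps power2_eq_square)
  have "qq z * (2 * \<rho> (fst z) (snd z) * Q1 z k) = qq z * (- (blinfun_apply (R1 z) k * qq z))"
    using H0 by (simp add: algebra_simps)
  then have "2 * \<rho> (fst z) (snd z) * Q1 z k = - (blinfun_apply (R1 z) k * qq z)"
    using qnz by (rule mult_left_cancel[THEN iffD1, rotated])
  then have "Q1 z k = - (qq z / (2 * \<rho> (fst z) (snd z))) * blinfun_apply (R1 z) k"
    using rho_nz[of "fst z" "snd z"] by (simp add: field_simps)
  then show ?thesis by simp
qed


definition "G1 z k = - (N1 z k * qq z + NN z * Q1 z k) / (2 * \<rho> (fst z) (snd z))
   + NN z * qq z * blinfun_apply (R1 z) k / (2 * (\<rho> (fst z) (snd z))\<^sup>2)"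

lemma dgg: "(gg has_derivative G1 z) (at z)"
proof -
  have "((\<lambda>z. - (NN z * qq z) / (2 * \<rho> (fst z) (snd z))) has_derivative G1 z) (at z)"
    using rho_nz[of "fst z" "snd z"]
    by (auto intro!: derivative_eq_intros dNN dqq dr simp: G1_def field_simps power2_eq_square)
  then show ?thesis unfolding gg_def[abs_def] .
qed

lemma G1_V: "G1 z (Vz z) = 0"
  unfolding G1_def using F2[of z "Vz z"] by (simp add: N1_V R1_V)

lemma divv: "(\<Sum>j\<in>UNIV. blinfun_apply (V1 z) (0, axis j 1) $ j) = 0"
proof -
  obtain t x where z: "z = (t,x)" by (cases z)
  have "dt D t x = 0" unfolding dt_def using var_p by simp
  moreover have "(\<lambda>y. D t y *\<^sub>R v t y) = v t" using var_p by simp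
  ultimately have "divg (v t) x = 0" using adv_D[of t x] by simp
  then show ?thesis unfolding divg_def z using pd_eq[OF comp_nth[OF dv]] by simp
qed

lemma Th1e_eq: "grad (\<theta> t) x $ i = blinfun_apply (Th1 (t,x)) (0, axis i 1)"
  unfolding grad_def using pd_eq[OF dth] by simp

lemma mom_eq: "SVE_mom \<sigma> \<epsilon> v D \<rho> \<theta> a t x $ i
   = \<rho> t x * (v t x $ i + NN (t,x) * qq (t,x) * blinfun_apply (Th1 (t,x)) (0, axis i 1))"
  unfolding SVE_mom_def by (simp add: var_p Th1e_eq NN_def qq_def)

definition "M1 i z k = blinfun_apply (R1 z) k * (v (fst z) (snd z) $ i + NN z * qq z * blinfun_apply (Th1 z) (0, axis i 1))
  + \<rho> (fst z) (snd z) * (blinfun_apply (V1 z) k $ i + (N1 z k * qq z + NN z * Q1 z k) * blinfun_apply (Th1 z) (0, axis i 1)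
       + NN z * qq z * blinfun_apply (blinfun_apply (Th2 z) k) (0, axis i 1))"

lemma dTh1e: "((\<lambda>z. blinfun_apply (Th1 z) w) has_derivative (\<lambda>k. blinfun_apply (blinfun_apply (Th2 z) k) w)) (at z)"
  using bounded_linear.has_derivative[OF bounded_bilinear.bounded_linear_left[OF bounded_bilinear_blinfun_apply] dTh1[of z]]
  by simp

lemma dmi: "((\<lambda>z. SVE_mom \<sigma> \<epsilon> v D \<rho> \<theta> a (fst z) (snd z) $ i) has_derivative M1 i z) (at z)"
proof -
  have "((\<lambda>z. \<rho> (fst z) (snd z) * (v (fst z) (snd z) $ i + NN z * qq z * blinfun_apply (Th1 z) (0, axis i 1)))
     has_derivative M1 i z) (at z)"
    unfolding M1_def
    by (auto intro!: derivative_eq_intros dNN dqq dr comp_nth[OF dv] dTh1e dTh1 simp: algebra_simps)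
  then show ?thesis by (simp add: mom_eq)
qed


lemma dD_eq: "SVE_dD \<sigma> \<epsilon> Fr \<rho>ref v \<rho> \<theta> a p t x = 1/2 * \<rho> t x * inner (v t x) (v t x) - p t x"
proof -
  have "waveN \<sigma> \<epsilon> a t x / 2 * \<rho> t x * ((matd v \<theta> t x)\<^sup>2 - \<rho>ref / \<rho> t x * Kconst \<sigma> \<epsilon> Fr) = 0"
    using NN_sq[of "(t,x)"] unfolding NN_def qq_def K0_def by auto
  then show ?thesis unfolding SVE_dD_def by (simp add: power2_norm_eq_inner)
qed

definition "E1 z k = 1/2 * blinfun_apply (R1 z) k * inner (v (fst z) (snd z)) (v (fst z) (snd z))
   + \<rho> (fst z) (snd z) * inner (v (fst z) (snd z)) (blinfun_apply (V1 z) k) - blinfun_apply (P1 z) k"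

lemma dE: "((\<lambda>z. SVE_dD \<sigma> \<epsilon> Fr \<rho>ref v \<rho> \<theta> a p (fst z) (snd z)) has_derivative E1 z) (at z)"
proof -
  have "((\<lambda>z. 1/2 * \<rho> (fst z) (snd z) * inner (v (fst z) (snd z)) (v (fst z) (snd z)) - p (fst z) (snd z))
     has_derivative E1 z) (at z)"
    unfolding E1_def
    by (auto intro!: derivative_eq_intros dr dv dp simp: algebra_simps inner_commute)
  then show ?thesis by (simp add: dD_eq)
qed

lemma drho_eq: "SVE_drho \<sigma> \<epsilon> v D \<theta> a t x = 1/2 * inner (v t x) (v t x) + NN (t,x) / 2 * (qq (t,x))\<^sup>2"
  unfolding SVE_drho_def by (simp add: var_p power2_norm_eq_inner NN_def qq_def)

lemma momentum: "\<rho> (fst z) (snd z) * (blinfun_apply (V1 z) (Vz z) $ i) = - blinfun_apply (P1 z) (0, axis i 1)"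
proof -
  obtain t x where z: "z = (t,x)" by (cases z)
  have T1: "dt (\<lambda>t x. SVE_mom \<sigma> \<epsilon> v D \<rho> \<theta> a t x $ i) t x = M1 i z (1,0)"
    using dt_eq[where f="\<lambda>t x. SVE_mom \<sigma> \<epsilon> v D \<rho> \<theta> a t x $ i", OF dmi] z by simp
  have T2: "pd (\<lambda>y. v t y $ j * SVE_mom \<sigma> \<epsilon> v D \<rho> \<theta> a t y $ i) j x
     = blinfun_apply (V1 z) (0, axis j 1) $ j * SVE_mom \<sigma> \<epsilon> v D \<rho> \<theta> a t x $ i + v t x $ j * M1 i z (0, axis j 1)" for j
  proof -
    have "((\<lambda>z. v (fst z) (snd z) $ j * SVE_mom \<sigma> \<epsilon> v D \<rho> \<theta> a (fst z) (snd z) $ i) has_derivative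
       (\<lambda>k. v (fst z) (snd z) $ j * M1 i z k + blinfun_apply (V1 z) k $ j * SVE_mom \<sigma> \<epsilon> v D \<rho> \<theta> a (fst z) (snd z) $ i)) (at z)" for z
      by (rule has_derivative_mult[OF comp_nth[OF dv] dmi])
    from pd_eq[where f="\<lambda>t y. v t y $ j * SVE_mom \<sigma> \<epsilon> v D \<rho> \<theta> a t y $ i", OF this]
    show ?thesis using z by simp
  qed
  have T3: "pd (\<lambda>y. v t y $ j) i x = blinfun_apply (V1 z) (0, axis i 1) $ j" for j
    using pd_eq[OF comp_nth[OF dv]] z by simp
  have T4: "pd (SVE_dD \<sigma> \<epsilon> Fr \<rho>ref v \<rho> \<theta> a p t) i x = E1 z (0, axis i 1)"
    using pd_eq[OF dE] z by simp
  have T5: "pd (\<rho> t) i x = blinfun_apply (R1 z) (0, axis i 1)"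
    using pd_eq[OF dr] z by simp
  have linM: "linear (M1 i z)" by (rule has_derivative_linear[OF dmi])
  have L1: "M1 i z (1,0) + (\<Sum>j\<in>UNIV. v t x $ j * M1 i z (0, axis j 1)) = M1 i z (Vz z)"
    using lin1[OF linM, of 1 "v t x"] lin2[OF linM, of "v t x"] z by (simp add: Vz_def)
  have Q0: "NN z * Q1 z (Vz z) = 0" using F2[of z "Vz z"] by (simp add: R1_V)
  have L2: "M1 i z (Vz z) = \<rho> t x * (blinfun_apply (V1 z) (Vz z) $ i
       + NN z * qq z * blinfun_apply (blinfun_apply (Th2 z) (Vz z)) (0, axis i 1))"
    unfolding M1_def using z R1_V[of z] N1_V[of z] Q0 by (simp add: algebra_simps) blast
  have symT: "blinfun_apply (blinfun_apply (Th2 z) (Vz z)) (0, axis i 1)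
      = blinfun_apply (blinfun_apply (Th2 z) (0, axis i 1)) (Vz z)"
    by (rule sym2[OF dth dTh1 cTh2])
  have linT: "linear (blinfun_apply (Th1 z))" by (rule has_derivative_linear[OF dth])
  have L3: "blinfun_apply (blinfun_apply (Th2 z) (Vz z)) (0, axis i 1)
     = Q1 z (0, axis i 1) - (\<Sum>j\<in>UNIV. blinfun_apply (V1 z) (0, axis i 1) $ j * blinfun_apply (Th1 z) (0, axis j 1))"
    unfolding symT Q1_def using lin2[OF linT, of "blinfun_apply (V1 z) (0, axis i 1)"] by simp
  have F2i: "\<rho> t x * (NN z * qq z * Q1 z (0, axis i 1)) = - (NN z * (qq z)\<^sup>2 / 2) * blinfun_apply (R1 z) (0, axis i 1)"
  proof -
    have "\<rho> t x * (NN z * qq z * Q1 z (0, axis i 1)) = qq z * (\<rho> t x * (NN z * Q1 z (0, axis i 1)))"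
      by (simp add: ac_simps)
    also have "\<dots> = qq z * (\<rho> t x * (- (NN z * qq z / (2 * \<rho> (fst z) (snd z))) * blinfun_apply (R1 z) (0, axis i 1)))"
      using F2[of z "(0, axis i 1)"] by simp
    also have "\<dots> = - (NN z * (qq z)\<^sup>2 / 2) * blinfun_apply (R1 z) (0, axis i 1)"
      using z rho_nz[of t x] by (simp add: field_simps power2_eq_square)
    finally show ?thesis .
  qed
  have dv0: "blinfun_apply (V1 z) (0, axis 1 1) $ 1 + blinfun_apply (V1 z) (0, axis 2 1) $ 2 = 0"
    using divv[of z] by (simp add: sum_2)
  note eq1 = var_v[where t=t and x=x and i=i, unfolded T1 T2 T3 T4 T5]
  have S: "M1 i z (1,0) + (\<Sum>j\<in>UNIV. blinfun_apply (V1 z) (0, axis j 1) $ j * SVE_mom \<sigma> \<epsilon> v D \<rho> \<theta> a t x $ i + v t x $ j * M1 i z (0, axis j 1))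
       = M1 i z (Vz z)"
  proof -
    have dv1: "blinfun_apply (V1 z) (0, axis 1 1) $ 1 = - (blinfun_apply (V1 z) (0, axis 2 1) $ 2)"
      using dv0 by simp
    show ?thesis using L1 by (simp add: sum_2 algebra_simps dv1)
  qed
  note eq2 = eq1[unfolded S]
  note eq2b = eq2[unfolded L2 L3]
  note eq3 = eq2b[unfolded var_p drho_eq mom_eq sum_2 E1_def inner_vec_def inner_real_def z fst_conv snd_conv]
  have F2i': "\<rho> t x * (NN (t,x) * qq (t,x) * Q1 (t,x) (0, axis i 1)) = - (NN (t,x) * (qq (t,x))\<^sup>2 / 2) * blinfun_apply (R1 (t,x)) (0, axis i 1)"
    using F2i z by simp
  have "\<rho> t x * (blinfun_apply (V1 (t,x)) (Vz (t,x)) $ i) = - blinfun_apply (P1 (t,x)) (0, axis i 1)"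
    using eq3 F2i' by algebra
  then show ?thesis using z by simp
qed


definition "cs t s = blinfun_apply (C1 (t,s)) (0,1)"
definition "PP w = (fst w, c (fst w) (snd w))"

lemma c_vd: "((c t) has_vector_derivative cs t s) (at s)"
proof -
  have d: "((c t) has_derivative (\<lambda>h. blinfun_apply (C1 (t,s)) (0,h))) (at s)"
    by (rule pdx[OF dc])
  have "(\<lambda>h. blinfun_apply (C1 (t,s)) (0,h)) = (\<lambda>h. h *\<^sub>R cs t s)"
  proof
    fix h :: real
    have "(0::real, h) = h *\<^sub>R (0::real, 1::real)" by simp
    then show "blinfun_apply (C1 (t,s)) (0,h) = h *\<^sub>R cs t s"
      unfolding cs_def by (metis blinfun.scaleR_right)
  qed
  with d show ?thesis by (simp add: has_vector_derivative_def)
qed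

lemma vd_c: "vector_derivative (c t) (at s) = cs t s"
  by (rule vector_derivative_at[OF c_vd])

lemma C1_flow: "blinfun_apply (C1 (t,s)) (1,0) = v t (c t s)"
proof -
  have "((\<lambda>\<tau>. (\<tau>, s)) has_derivative (\<lambda>h. (h, 0))) (at t)"
    by (rule has_derivative_Pair[OF has_derivative_ident has_derivative_const])
  from has_derivative_compose[OF this dc[of "(t,s)"]]
  have d: "((\<lambda>\<tau>. c \<tau> s) has_derivative (\<lambda>h. blinfun_apply (C1 (t,s)) (h,0))) (at t)" by simp
  have "(\<lambda>h. blinfun_apply (C1 (t,s)) (h,0)) = (\<lambda>h. h *\<^sub>R blinfun_apply (C1 (t,s)) (1,0))"
  proof
    fix h :: real
    have "(h, 0::real) = h *\<^sub>R (1::real, 0::real)" by simp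
    then show "blinfun_apply (C1 (t,s)) (h,0) = h *\<^sub>R blinfun_apply (C1 (t,s)) (1,0)"
      by (metis blinfun.scaleR_right)
  qed
  with d have "((\<lambda>\<tau>. c \<tau> s) has_vector_derivative blinfun_apply (C1 (t,s)) (1,0)) (at t)"
    by (simp add: has_vector_derivative_def)
  from vector_derivative_unique_at[OF this loop_flow] show ?thesis .
qed

lemma dPP_s: "((\<lambda>\<sigma>. (t, c t \<sigma>)) has_derivative (\<lambda>h. (0, h *\<^sub>R cs t s))) (at s)"
  using has_derivative_Pair[OF has_derivative_const c_vd[unfolded has_vector_derivative_def]] .

lemma dPP_t: "((\<lambda>\<tau>. (\<tau>, c \<tau> s)) has_derivative (\<lambda>h. h *\<^sub>R Vz (t, c t s))) (at t)"
  using has_derivative_Pair[OF has_derivative_ident loop_flow[unfolded has_vector_derivative_def]]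
  by (simp add: Vz_def)

lemma v_s: "((\<lambda>\<sigma>. v t (c t \<sigma>)) has_vector_derivative blinfun_apply (V1 (t, c t s)) (0, cs t s)) (at s)"
proof -
  from has_derivative_compose[OF dPP_s dv]
  have "((\<lambda>\<sigma>. v t (c t \<sigma>)) has_derivative (\<lambda>h. blinfun_apply (V1 (t, c t s)) (0, h *\<^sub>R cs t s))) (at s)"
    by simp
  moreover have "(\<lambda>h. blinfun_apply (V1 (t, c t s)) (0, h *\<^sub>R cs t s)) = (\<lambda>h. h *\<^sub>R blinfun_apply (V1 (t, c t s)) (0, cs t s))"
  proof
    fix h :: real
    have "(0::real, h *\<^sub>R cs t s) = h *\<^sub>R (0::real, cs t s)" by simp
    then show "blinfun_apply (V1 (t, c t s)) (0, h *\<^sub>R cs t s) = h *\<^sub>R blinfun_apply (V1 (t, c t s)) (0, cs t s)"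
      by (metis blinfun.scaleR_right)
  qed
  ultimately show ?thesis by (simp add: has_vector_derivative_def)
qed

lemma C1e_s: "((\<lambda>\<sigma>. blinfun_apply (C1 (t,\<sigma>)) w) has_vector_derivative blinfun_apply (blinfun_apply (C2 (t,s)) (0,1)) w) (at s)"
proof -
  have "((\<lambda>\<sigma>. (t, \<sigma>)) has_derivative (\<lambda>h. (0, h))) (at s)"
    by (rule has_derivative_Pair[OF has_derivative_const has_derivative_ident])
  from has_derivative_compose[OF this dC1[of "(t,s)"]]
  have d: "((\<lambda>\<sigma>. C1 (t,\<sigma>)) has_derivative (\<lambda>h. blinfun_apply (C2 (t,s)) (0,h))) (at s)" by simp
  have "((\<lambda>\<sigma>. blinfun_apply (C1 (t,\<sigma>)) w) has_derivative (\<lambda>h. blinfun_apply (blinfun_apply (C2 (t,s)) (0,h)) w)) (at s)"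
    using bounded_linear.has_derivative[OF bounded_bilinear.bounded_linear_left[OF bounded_bilinear_blinfun_apply] d]
    by simp
  moreover have "(\<lambda>h. blinfun_apply (blinfun_apply (C2 (t,s)) (0,h)) w) = (\<lambda>h. h *\<^sub>R blinfun_apply (blinfun_apply (C2 (t,s)) (0,1)) w)"
  proof
    fix h :: real
    have "(0::real, h) = h *\<^sub>R (0::real, 1::real)" by simp
    then show "blinfun_apply (blinfun_apply (C2 (t,s)) (0,h)) w = h *\<^sub>R blinfun_apply (blinfun_apply (C2 (t,s)) (0,1)) w"
      by (metis blinfun.scaleR_right blinfun.scaleR_left)
  qed
  ultimately show ?thesis by (simp add: has_vector_derivative_def)
qed

lemma C1e_t: "((\<lambda>\<tau>. blinfun_apply (C1 (\<tau>,s)) w) has_vector_derivative blinfun_apply (blinfun_apply (C2 (t,s)) (1,0)) w) (at t)"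
proof -
  have "((\<lambda>\<tau>. (\<tau>, s)) has_derivative (\<lambda>h. (h, 0))) (at t)"
    by (rule has_derivative_Pair[OF has_derivative_ident has_derivative_const])
  from has_derivative_compose[OF this dC1[of "(t,s)"]]
  have d: "((\<lambda>\<tau>. C1 (\<tau>,s)) has_derivative (\<lambda>h. blinfun_apply (C2 (t,s)) (h,0))) (at t)" by simp
  have "((\<lambda>\<tau>. blinfun_apply (C1 (\<tau>,s)) w) has_derivative (\<lambda>h. blinfun_apply (blinfun_apply (C2 (t,s)) (h,0)) w)) (at t)"
    using bounded_linear.has_derivative[OF bounded_bilinear.bounded_linear_left[OF bounded_bilinear_blinfun_apply] d]
    by simp
  moreover have "(\<lambda>h. blinfun_apply (blinfun_apply (C2 (t,s)) (h,0)) w) = (\<lambda>h. h *\<^sub>R blinfun_apply (blinfun_apply (C2 (t,s)) (1,0)) w)"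
  proof
    fix h :: real
    have "(h, 0::real) = h *\<^sub>R (1::real, 0::real)" by simp
    then show "blinfun_apply (blinfun_apply (C2 (t,s)) (h,0)) w = h *\<^sub>R blinfun_apply (blinfun_apply (C2 (t,s)) (1,0)) w"
      by (metis blinfun.scaleR_right blinfun.scaleR_left)
  qed
  ultimately show ?thesis by (simp add: has_vector_derivative_def)
qed

lemma mixed_c: "blinfun_apply (blinfun_apply (C2 (t,s)) (1,0)) (0,1) = blinfun_apply (V1 (t, c t s)) (0, cs t s)"
proof -
  have "blinfun_apply (blinfun_apply (C2 (t,s)) (1,0)) (0,1) = blinfun_apply (blinfun_apply (C2 (t,s)) (0,1)) (1,0)"
    by (rule sym2[OF dc dC1 cC2])
  also have "\<dots> = blinfun_apply (V1 (t, c t s)) (0, cs t s)"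
  proof -
    have "((\<lambda>\<sigma>. v t (c t \<sigma>)) has_vector_derivative blinfun_apply (blinfun_apply (C2 (t,s)) (0,1)) (1,0)) (at s)"
      using C1e_s[of t "(1,0)" s] by (simp add: C1_flow)
    from vector_derivative_unique_at[OF this v_s] show ?thesis .
  qed
  finally show ?thesis .
qed

lemma R2_V: "blinfun_apply (blinfun_apply (R2 z) k) (Vz z) = - blinfun_apply (R1 z) (0, blinfun_apply (V1 z) k)"
proof -
  have d: "((\<lambda>z. blinfun_apply (R1 z) (Vz z)) has_derivative
     (\<lambda>k. blinfun_apply (R1 z) (0, blinfun_apply (V1 z) k) + blinfun_apply (blinfun_apply (R2 z) k) (Vz z))) (at z)"
    by (rule bounded_bilinear.FDERIV[OF bounded_bilinear_blinfun_apply dR1 dVz])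
  have "(\<lambda>z. blinfun_apply (R1 z) (Vz z)) = (\<lambda>z. 0)" using R1_V by auto
  then have d0: "((\<lambda>z. blinfun_apply (R1 z) (Vz z)) has_derivative (\<lambda>k. 0)) (at z)" by simp
  from has_derivative_unique[OF d d0] have
    "(\<lambda>k. blinfun_apply (R1 z) (0, blinfun_apply (V1 z) k) + blinfun_apply (blinfun_apply (R2 z) k) (Vz z)) = (\<lambda>k. 0)" .
  then have "blinfun_apply (R1 z) (0, blinfun_apply (V1 z) k) + blinfun_apply (blinfun_apply (R2 z) k) (Vz z) = 0"
    by metis
  then show ?thesis by (simp add: eq_neg_iff_add_eq_0 add.commute)
qed


lemma innerVP: "inner (blinfun_apply (V1 z) (Vz z)) u = - (1 / \<rho> (fst z) (snd z)) * blinfun_apply (P1 z) (0, u)"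
proof -
  have linP: "linear (blinfun_apply (P1 z))" by (rule has_derivative_linear[OF dp])
  have m: "blinfun_apply (V1 z) (Vz z) $ i = - blinfun_apply (P1 z) (0, axis i 1) / \<rho> (fst z) (snd z)" for i
    using momentum[of z i] rho_nz[of "fst z" "snd z"] by (simp add: field_simps)
  show ?thesis
    unfolding inner_vec_def lin2[OF linP, of u] using rho_nz[of "fst z" "snd z"]
    by (simp add: sum_2 m field_simps)
qed

definition "GG t s = inner (v t (c t s)) (cs t s) + gg (t, c t s) * blinfun_apply (R1 (t, c t s)) (0, cs t s)"
definition "Gt t s = - (1 / \<rho> t (c t s)) * blinfun_apply (P1 (t, c t s)) (0, cs t s)
    + inner (v t (c t s)) (blinfun_apply (V1 (t, c t s)) (0, cs t s))"

lemma dGG: "((\<lambda>\<tau>. GG \<tau> s) has_real_derivative Gt t s) (at t)"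
proof -
  define w where "w = (t, c t s)"
  define X where "X = blinfun_apply (blinfun_apply (C2 (t,s)) (1,0)) (0,1)"
  have dv_t: "((\<lambda>\<tau>. v \<tau> (c \<tau> s)) has_derivative (\<lambda>h. blinfun_apply (V1 w) (h *\<^sub>R Vz w))) (at t)"
    using has_derivative_compose[OF dPP_t dv] unfolding w_def by simp
  have dcs_t: "((\<lambda>\<tau>. cs \<tau> s) has_derivative (\<lambda>h. h *\<^sub>R X)) (at t)"
    using C1e_t[where w="(0,1)" and s=s and t=t, unfolded has_vector_derivative_def] unfolding cs_def X_def .
  have dgg_t: "((\<lambda>\<tau>. gg (\<tau>, c \<tau> s)) has_derivative (\<lambda>h. G1 w (h *\<^sub>R Vz w))) (at t)"
    using has_derivative_compose[OF dPP_t dgg] unfolding w_def by simp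
  have dR1_t: "((\<lambda>\<tau>. R1 (\<tau>, c \<tau> s)) has_derivative (\<lambda>h. blinfun_apply (R2 w) (h *\<^sub>R Vz w))) (at t)"
    using has_derivative_compose[OF dPP_t dR1] unfolding w_def by simp
  have d0cs: "((\<lambda>\<tau>. (0::real, cs \<tau> s)) has_derivative (\<lambda>h. (0, h *\<^sub>R X))) (at t)"
    by (rule has_derivative_Pair[OF has_derivative_const dcs_t])
  have dR: "((\<lambda>\<tau>. blinfun_apply (R1 (\<tau>, c \<tau> s)) (0, cs \<tau> s)) has_derivative
     (\<lambda>h. blinfun_apply (R1 w) (0, h *\<^sub>R X) + blinfun_apply (blinfun_apply (R2 w) (h *\<^sub>R Vz w)) (0, cs t s))) (at t)"
    using bounded_bilinear.FDERIV[OF bounded_bilinear_blinfun_apply dR1_t d0cs] unfolding w_def by simp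
  have dall: "((\<lambda>\<tau>. GG \<tau> s) has_derivative
    (\<lambda>h. (inner (v t (c t s)) (h *\<^sub>R X) + inner (blinfun_apply (V1 w) (h *\<^sub>R Vz w)) (cs t s))
       + (gg (t, c t s) * (blinfun_apply (R1 w) (0, h *\<^sub>R X) + blinfun_apply (blinfun_apply (R2 w) (h *\<^sub>R Vz w)) (0, cs t s))
          + G1 w (h *\<^sub>R Vz w) * blinfun_apply (R1 (t, c t s)) (0, cs t s)))) (at t)"
    unfolding GG_def[abs_def]
    by (rule has_derivative_add[OF has_derivative_inner[OF dv_t dcs_t] has_derivative_mult[OF dgg_t dR]])
  have linG: "linear (G1 w)" by (rule has_derivative_linear[OF dgg])
  have X_eq: "X = blinfun_apply (V1 w) (0, cs t s)" unfolding X_def w_def by (rule mixed_c)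
  have R2s: "blinfun_apply (blinfun_apply (R2 w) (Vz w)) (0, cs t s) = - blinfun_apply (R1 w) (0, blinfun_apply (V1 w) (0, cs t s))"
    using sym2[OF dr dR1 cR2, of w "Vz w" "(0, cs t s)"] R2_V[of w "(0, cs t s)"] by simp
  have lin_pair: "(0::real, h *\<^sub>R X) = h *\<^sub>R (0::real, X)" for h by simp
  have eqD: "(\<lambda>h. (inner (v t (c t s)) (h *\<^sub>R X) + inner (blinfun_apply (V1 w) (h *\<^sub>R Vz w)) (cs t s))
       + (gg (t, c t s) * (blinfun_apply (R1 w) (0, h *\<^sub>R X) + blinfun_apply (blinfun_apply (R2 w) (h *\<^sub>R Vz w)) (0, cs t s))
          + G1 w (h *\<^sub>R Vz w) * blinfun_apply (R1 (t, c t s)) (0, cs t s))) = (\<lambda>h. Gt t s * h)"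
  proof
    fix h :: real
    have "G1 w (h *\<^sub>R Vz w) = 0" using linear_scale[OF linG, of h "Vz w"] G1_V[of w] by simp
    moreover have "blinfun_apply (R1 w) (0, h *\<^sub>R X) = h * blinfun_apply (R1 w) (0, X)"
    proof -
      have "blinfun_apply (R1 w) (0, h *\<^sub>R X) = blinfun_apply (R1 w) (h *\<^sub>R (0, X))"
        by (simp only: lin_pair)
      also have "\<dots> = h *\<^sub>R blinfun_apply (R1 w) (0, X)" by (rule blinfun.scaleR_right)
      finally show ?thesis by simp
    qed
    moreover have "blinfun_apply (blinfun_apply (R2 w) (h *\<^sub>R Vz w)) (0, cs t s) = h * blinfun_apply (blinfun_apply (R2 w) (Vz w)) (0, cs t s)"
      by (simp add: blinfun.scaleR_right blinfun.scaleR_left)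
    moreover have "inner (blinfun_apply (V1 w) (h *\<^sub>R Vz w)) (cs t s) = h * inner (blinfun_apply (V1 w) (Vz w)) (cs t s)"
      by (simp add: blinfun.scaleR_right)
    ultimately show "(inner (v t (c t s)) (h *\<^sub>R X) + inner (blinfun_apply (V1 w) (h *\<^sub>R Vz w)) (cs t s))
       + (gg (t, c t s) * (blinfun_apply (R1 w) (0, h *\<^sub>R X) + blinfun_apply (blinfun_apply (R2 w) (h *\<^sub>R Vz w)) (0, cs t s))
          + G1 w (h *\<^sub>R Vz w) * blinfun_apply (R1 (t, c t s)) (0, cs t s)) = Gt t s * h"
      unfolding Gt_def using innerVP[of w "cs t s"] R2s X_eq
      by (simp add: w_def algebra_simps)
  qed
  show ?thesis unfolding has_field_derivative_def using dall eqD by simp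
qed


lemma cPPf:
  assumes "continuous_on UNIV (F :: Zt \<Rightarrow> 'x::topological_space)"
  shows "continuous_on S (\<lambda>w::real\<times>real. F (fst w, c (fst w) (snd w)))"
proof -
  have cc: "continuous_on UNIV (\<lambda>w::real\<times>real. c (fst w) (snd w))" by (rule diff_cont_UNIV[OF dc])
  have "continuous_on UNIV (\<lambda>w::real\<times>real. (fst w, c (fst w) (snd w)))"
    by (intro continuous_intros cc)
  from continuous_on_subset[OF cont_UNIV_comp[OF assms this]] show ?thesis by simp
qed

lemma cPPf2:
  assumes "continuous_on UNIV (\<lambda>z. (F :: real \<Rightarrow> real^2 \<Rightarrow> 'x::topological_space) (fst z) (snd z))"
  shows "continuous_on S (\<lambda>w::real\<times>real. F (fst w) (c (fst w) (snd w)))"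
  using cPPf[OF assms] by simp

lemma cC1: "continuous_on S (\<lambda>w. C1 (fst w, snd w))"
  using continuous_on_subset[OF diff_cont_UNIV[OF dC1]] by auto

lemma cGt: "continuous_on S (\<lambda>w. Gt (fst w) (snd w))"
proof -
  have c1: "continuous_on S (\<lambda>w::real\<times>real. \<rho> (fst w) (c (fst w) (snd w)))"
    by (rule cPPf2[OF diff_cont_UNIV[OF dr]])
  have c2: "continuous_on S (\<lambda>w::real\<times>real. P1 (fst w, c (fst w) (snd w)))"
    by (rule cPPf[OF cP1])
  have c3: "continuous_on S (\<lambda>w::real\<times>real. v (fst w) (c (fst w) (snd w)))"
    by (rule cPPf2[OF diff_cont_UNIV[OF dv]])
  have c4: "continuous_on S (\<lambda>w::real\<times>real. V1 (fst w, c (fst w) (snd w)))"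
    by (rule cPPf[OF cV1])
  show ?thesis unfolding Gt_def cs_def
    by (intro continuous_intros c1 c2 c3 c4 cC1) (simp add: rho_nz)
qed

lemma cGG: "continuous_on S (\<lambda>w. GG (fst w) (snd w))"
proof -
  have c1: "continuous_on S (\<lambda>w::real\<times>real. gg (fst w, c (fst w) (snd w)))"
    by (rule cPPf[OF diff_cont_UNIV[OF dgg]])
  have c2: "continuous_on S (\<lambda>w::real\<times>real. R1 (fst w, c (fst w) (snd w)))"
    by (rule cPPf[OF diff_cont_UNIV[OF dR1]])
  have c3: "continuous_on S (\<lambda>w::real\<times>real. v (fst w) (c (fst w) (snd w)))"
    by (rule cPPf2[OF diff_cont_UNIV[OF dv]])
  show ?thesis unfolding GG_def cs_def
    by (intro continuous_intros c1 c2 c3 cC1)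
qed


lemma kelvin_main:
  "((\<lambda>t. circ (\<lambda>r. v t r + waveN \<sigma> \<epsilon> a t r *\<^sub>R grad (matd v \<theta> t) r) (c t))
      has_real_derivative (- circ (\<lambda>r. (1 / \<rho> t r) *\<^sub>R grad (p t) r) (c t))) (at t)"
proof -
  have integrand: "(v t (c t s) + waveN \<sigma> \<epsilon> a t (c t s) *\<^sub>R grad (matd v \<theta> t) (c t s)) \<bullet> vector_derivative (c t) (at s)
      = GG t s" for t s
  proof -
    have "grad (matd v \<theta> t) (c t s) \<bullet> cs t s = Q1 (t, c t s) (0, cs t s)"
      by (rule grad_inner[OF dqq'])
    moreover have "NN (t, c t s) * Q1 (t, c t s) (0, cs t s) = gg (t, c t s) * blinfun_apply (R1 (t, c t s)) (0, cs t s)"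
      using F2[of "(t, c t s)" "(0, cs t s)"] by (simp add: gg_def)
    ultimately show ?thesis unfolding vd_c GG_def
      by (simp add: inner_add_left NN_def)
  qed
  have LHS: "(\<lambda>t. circ (\<lambda>r. v t r + waveN \<sigma> \<epsilon> a t r *\<^sub>R grad (matd v \<theta> t) r) (c t))
      = (\<lambda>t. integral (cbox 0 1) (GG t))"
    unfolding circ_def integrand by simp
  have contS: "continuous_on T (\<lambda>s. F t s)" if "continuous_on UNIV (\<lambda>w. F (fst w) (snd w))"
    for F :: "real \<Rightarrow> real \<Rightarrow> real" and T t
  proof -
    have "continuous_on UNIV (\<lambda>s::real. (t, s))" by (intro continuous_intros)
    from continuous_on_subset[OF cont_UNIV_comp[OF that this]] show ?thesis by simp
  qed
  have leib: "((\<lambda>t. integral (cbox 0 1) (GG t)) has_field_derivative integral (cbox 0 1) (Gt t)) (at t within UNIV)"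
  proof (rule leibniz_rule_field_derivative)
    fix x s show "((\<lambda>x. GG x s) has_field_derivative Gt x s) (at x within UNIV)"
      using dGG by simp
  next
    fix x show "GG x integrable_on cbox 0 1"
      by (rule integrable_continuous[OF contS[OF cGG]])
  next
    show "continuous_on (UNIV \<times> cbox 0 1) (\<lambda>(x, t). Gt x t)"
      unfolding split_beta by (rule cGt)
  qed auto
  define A where "A s = (1 / \<rho> t (c t s)) * blinfun_apply (P1 (t, c t s)) (0, cs t s)" for s
  define B where "B s = inner (v t (c t s)) (blinfun_apply (V1 (t, c t s)) (0, cs t s))" for s
  have GtAB: "Gt t = (\<lambda>s. - A s + B s)" unfolding A_def B_def Gt_def by auto
  have cA: "continuous_on {0..1} A"
  proof -
    have c1: "continuous_on S (\<lambda>w::real\<times>real. \<rho> (fst w) (c (fst w) (snd w)))" for S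
      by (rule cPPf2[OF diff_cont_UNIV[OF dr]])
    have c2: "continuous_on S (\<lambda>w::real\<times>real. P1 (fst w, c (fst w) (snd w)))" for S
      by (rule cPPf[OF cP1])
    have "continuous_on UNIV (\<lambda>w::real\<times>real. (1 / \<rho> (fst w) (c (fst w) (snd w))) * blinfun_apply (P1 (fst w, c (fst w) (snd w))) (0, blinfun_apply (C1 (fst w, snd w)) (0,1)))"
      by (intro continuous_intros c1 c2 cC1) (simp add: rho_nz)
    from contS[OF this] show ?thesis unfolding A_def cs_def by simp
  qed
  have cB: "continuous_on {0..1} B"
  proof -
    have "continuous_on {0..1} (\<lambda>s. Gt t s + A s)"
      by (intro continuous_intros cA contS[OF cGt])
    moreover have "(\<lambda>s. Gt t s + A s) = B" using GtAB by auto
    ultimately show ?thesis by metis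
  qed
  have intB: "integral {0..1} B = 0"
  proof -
    define H where "H s = inner (v t (c t s)) (v t (c t s)) / 2" for s
    have "(B has_integral (H 1 - H 0)) {0..1}"
    proof (rule fundamental_theorem_of_calculus)
      fix s :: real assume "s \<in> {0..1}"
      have d: "((\<lambda>\<sigma>. v t (c t \<sigma>)) has_derivative (\<lambda>h. h *\<^sub>R blinfun_apply (V1 (t, c t s)) (0, cs t s))) (at s)"
        using v_s[of t s] by (simp add: has_vector_derivative_def)
      have "(H has_derivative (\<lambda>h. (inner (v t (c t s)) (h *\<^sub>R blinfun_apply (V1 (t, c t s)) (0, cs t s))
          + inner (h *\<^sub>R blinfun_apply (V1 (t, c t s)) (0, cs t s)) (v t (c t s))) / 2)) (at s)"
        unfolding H_def[abs_def]
        by (rule bounded_linear.has_derivative[OF bounded_linear_divide has_derivative_inner[OF d d]])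
      moreover have "(\<lambda>h. (inner (v t (c t s)) (h *\<^sub>R blinfun_apply (V1 (t, c t s)) (0, cs t s))
          + inner (h *\<^sub>R blinfun_apply (V1 (t, c t s)) (0, cs t s)) (v t (c t s))) / 2) = (\<lambda>h. h *\<^sub>R B s)"
        unfolding B_def by (auto simp: inner_commute)
      ultimately have "(H has_vector_derivative B s) (at s)"
        by (simp add: has_vector_derivative_def)
      then show "(H has_vector_derivative B s) (at s within {0..1})"
        by (rule has_vector_derivative_at_within)
    qed simp
    moreover have "H 1 = H 0" unfolding H_def using loop_closed[of t] by simp
    ultimately show ?thesis by (simp add: integral_unique)
  qed
  have circP: "circ (\<lambda>r. (1 / \<rho> t r) *\<^sub>R grad (p t) r) (c t) = integral {0..1} A"
    unfolding circ_def A_def vd_c by (simp add: grad_inner[OF dp])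
  have "integral {0..1} (Gt t) = - integral {0..1} A + integral {0..1} B"
    unfolding GtAB
    by (simp add: integral_diff integrable_continuous_real cA cB)
  then have "integral (cbox 0 1) (Gt t) = - circ (\<lambda>r. (1 / \<rho> t r) *\<^sub>R grad (p t) r) (c t)"
    using intB circP by simp
  with leib LHS show ?thesis by simp
qed

end

lemma smooth2_obt:
  assumes "smooth2 f"
  obtains F1 F2 where "\<And>z. ((\<lambda>z. f (fst z) (snd z)) has_derivative blinfun_apply (F1 z)) (at z)"
    "\<And>z. (F1 has_derivative blinfun_apply (F2 z)) (at z)" "continuous_on UNIV F2"
  using assms unfolding smooth2_def C2fun_def C1fun_def by blast

lemma C2fun_obt:
  assumes "C2fun F"
  obtains F1 F2 where "\<And>z. (F has_derivative blinfun_apply (F1 z)) (at z)"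
    "\<And>z. (F1 has_derivative blinfun_apply (F2 z)) (at z)" "continuous_on UNIV F2"
  using assms unfolding C2fun_def C1fun_def by blast

theorem mainTheorem4:
  fixes v :: "real \<Rightarrow> real^2 \<Rightarrow> real^2"
    and D \<rho> \<theta> p :: "real \<Rightarrow> real^2 \<Rightarrow> real"
    and a :: "real \<Rightarrow> real^2 \<Rightarrow> complex"
    and c :: "real \<Rightarrow> real \<Rightarrow> real^2"
    and \<sigma> \<epsilon> Fr \<rho>ref :: real
  assumes constants: "\<epsilon> > 0" "\<sigma> \<noteq> 0" "Fr \<noteq> 0" "\<rho>ref > 0"
    and smooth: "smooth2 v" "smooth2 D" "smooth2 \<rho>" "smooth2 \<theta>" "smooth2 p" "smooth2 a"
    and rho_pos: "\<And>t x. \<rho> t x > 0"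
    \<comment> \<open>variation in p: incompressibility constraint\<close>
    and var_p: "\<And>t x. D t x = 1"
    \<comment> \<open>advection of the areal density D d^2r and of the buoyancy rho\<close>
    and adv_D: "\<And>t x. dt D t x + divg (\<lambda>y. D t y *\<^sub>R v t y) x = 0"
    and adv_rho: "\<And>t x. matd v \<rho> t x = 0"
    \<comment> \<open>variation in the amplitude a (Euler-Lagrange equation w.r.t. conj a)\<close>
    and var_a: "\<And>t x. complex_of_real (\<sigma>\<^sup>2 / (8 * \<epsilon>\<^sup>2) * D t x * \<rho> t x
                  * ((matd v \<theta> t x)\<^sup>2 - \<rho>ref / \<rho> t x * Kconst \<sigma> \<epsilon> Fr)) * a t x = 0"
    \<comment> \<open>variation in theta: conservation of wave action\<close>
    and var_theta: "\<And>t x. dt (\<lambda>t x. waveN \<sigma> \<epsilon> a t x * D t x * \<rho> t x * matd v \<theta> t x) t x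
                  + divg (\<lambda>y. (waveN \<sigma> \<epsilon> a t y * D t y * \<rho> t y * matd v \<theta> t y) *\<^sub>R v t y) x = 0"
    \<comment> \<open>advection of |a|^2\<close>
    and adv_a: "\<And>t x. matd v (\<lambda>t x. (cmod (a t x))\<^sup>2) t x = 0"
    \<comment> \<open>Euler-Poincare equation (variation in v), componentwise:
        (\<partial>_t + ad^*_v) \<delta>l/\<delta>v = D grad(\<delta>l/\<delta>D) - (\<delta>l/\<delta>rho) grad rho\<close>
    and var_v: "\<And>t x i.
        dt (\<lambda>t x. SVE_mom \<sigma> \<epsilon> v D \<rho> \<theta> a t x $ i) t x
        + (\<Sum>j\<in>UNIV. pd (\<lambda>y. v t y $ j * SVE_mom \<sigma> \<epsilon> v D \<rho> \<theta> a t y $ i) j x)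
        + (\<Sum>j\<in>UNIV. SVE_mom \<sigma> \<epsilon> v D \<rho> \<theta> a t x $ j * pd (\<lambda>y. v t y $ j) i x)
        = D t x * pd (SVE_dD \<sigma> \<epsilon> Fr \<rho>ref v \<rho> \<theta> a p t) i x
          - SVE_drho \<sigma> \<epsilon> v D \<theta> a t x * pd (\<rho> t) i x"
    \<comment> \<open>the closed loop c(t) is carried by the horizontal flow\<close>
    and loop_smooth: "C2fun (\<lambda>z. c (fst z) (snd z))"
    and loop_closed: "\<And>t. c t 0 = c t 1"
    and loop_flow: "\<And>t s. ((\<lambda>\<tau>. c \<tau> s) has_vector_derivative v t (c t s)) (at t)"
  shows "\<And>t. ((\<lambda>t. circ (\<lambda>r. v t r + waveN \<sigma> \<epsilon> a t r *\<^sub>R grad (matd v \<theta> t) r) (c t))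
             has_real_derivative
               (- circ (\<lambda>r. (1 / \<rho> t r) *\<^sub>R grad (p t) r) (c t))) (at t)"
proof -
  obtain V1 V2 where dv: "\<And>z. ((\<lambda>z. v (fst z) (snd z)) has_derivative blinfun_apply (V1 z)) (at z)"
    and dV1: "\<And>z. (V1 has_derivative blinfun_apply (V2 z)) (at z)" and "continuous_on UNIV V2"
    by (rule smooth2_obt[OF smooth(1)]) blast
  obtain R1 R2 where dr: "\<And>z. ((\<lambda>z. \<rho> (fst z) (snd z)) has_derivative blinfun_apply (R1 z)) (at z)"
    and dR1: "\<And>z. (R1 has_derivative blinfun_apply (R2 z)) (at z)" and cR2: "continuous_on UNIV R2"
    by (rule smooth2_obt[OF smooth(3)]) blast
  obtain Th1 Th2 where dth: "\<And>z. ((\<lambda>z. \<theta> (fst z) (snd z)) has_derivative blinfun_apply (Th1 z)) (at z)"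
    and dTh1: "\<And>z. (Th1 has_derivative blinfun_apply (Th2 z)) (at z)" and cTh2: "continuous_on UNIV Th2"
    by (rule smooth2_obt[OF smooth(4)]) blast
  obtain P1 P2 where dp: "\<And>z. ((\<lambda>z. p (fst z) (snd z)) has_derivative blinfun_apply (P1 z)) (at z)"
    and dP1: "\<And>z. (P1 has_derivative blinfun_apply (P2 z)) (at z)" and "continuous_on UNIV P2"
    by (rule smooth2_obt[OF smooth(5)]) blast
  obtain A1 A2 where da: "\<And>z. ((\<lambda>z. a (fst z) (snd z)) has_derivative blinfun_apply (A1 z)) (at z)"
    and "\<And>z. (A1 has_derivative blinfun_apply (A2 z)) (at z)" and "continuous_on UNIV A2"
    by (rule smooth2_obt[OF smooth(6)]) blast
  obtain C1 C2 where dc: "\<And>z. ((\<lambda>z. c (fst z) (snd z)) has_derivative blinfun_apply (C1 z)) (at z)"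
    and dC1: "\<And>z. (C1 has_derivative blinfun_apply (C2 z)) (at z)" and cC2: "continuous_on UNIV C2"
    by (rule C2fun_obt[OF loop_smooth]) blast
  interpret K: kelvin v D \<rho> \<theta> p a c \<sigma> \<epsilon> Fr \<rho>ref V1 R1 R2 Th1 Th2 P1 A1 C1 C2
    using constants rho_pos var_p adv_D adv_rho var_a adv_a var_v loop_closed loop_flow
         dv diff_cont_UNIV[OF dV1] dr dR1 cR2 dth dTh1 cTh2 dp diff_cont_UNIV[OF dP1] da dc dC1 cC2
    by (rule kelvin.intro)
  fix t
  show "((\<lambda>t. circ (\<lambda>r. v t r + waveN \<sigma> \<epsilon> a t r *\<^sub>R grad (matd v \<theta> t) r) (c t))
             has_real_derivative
               (- circ (\<lambda>r. (1 / \<rho> t r) *\<^sub>R grad (p t) r) (c t))) (at t)"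
    by (rule K.kelvin_main)
qed

end
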